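(* Given $f\in\mathcal{N}_{2,\omega}$, we have $f\in\mathcal{N}_{3,\max(\omega,4d)}$ and $$R_3(f;\max(\omega,4d))\le\frac{4d}{3}+\frac43R_2(f;\omega).$$
   Context: Inputs lie in $\mathcal{X}_d=\mathbb{S}^{d-1}\times\mathbb{S}^{d-1}\subset\mathbb{R}^{2d}$. A depth-$L$ ReLU network is $f_{\phi}(\mathbf{x})=\mathbf{w}_L^\top[\mathbf{W}_{L-1}[\cdots[\mathbf{W}_1\mathbf{x}+\mathbf{b}_1]_+\cdots]_++\mathbf{b}_{L-1}]_++b_L$, with $\phi=(\mathbf{W}_1,\mathbf{b}_1,\dots,\mathbf{w}_L,b_L)$; $\mathcal{N}_{L,\omega}$ is the set of such functions with all hidden widths at most $\omega$; $\|\phi\|^2$ is the sum of squares of all weights and biases; $R_L(f;\omega)=\inf\{\|\phi\|^2/L:\ f_\phi=f\text{ on }\mathcal{X}_d,\ \text{all hidden widths}\le\omega\}$. *)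

theory Defs
  imports Complex_Main
begin

text \<open>Vectors are real lists, a matrix is the list of its rows.
A network phi = (Ls, w, c) consists of the hidden layers Ls = [(W_1,b_1),...,(W_{L-1},b_{L-1})],
the output weight vector w = w_L and the output bias c = b_L.\<close>

type_synonym layer = "real list list \<times> real list"
type_synonym net = "layer list \<times> real list \<times> real"

definition relu :: "real \<Rightarrow> real" where
  "relu t = max t 0"

definition matvec :: "real list list \<Rightarrow> real list \<Rightarrow> real list" where
  "matvec W x = map (\<lambda>row. sum_list (map2 (*) row x)) W"

definition apply_layer :: "layer \<Rightarrow> real list \<Rightarrow> real list" where
  "apply_layer l x = map relu (map2 (+) (matvec (fst l) x) (snd l))"

definition eval_net :: "net \<Rightarrow> real list \<Rightarrow> real" where
  "eval_net phi x =
     (case phi of (Ls, w, c) \<Rightarrow>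
        sum_list (map2 (*) w (foldl (\<lambda>v l. apply_layer l v) x Ls)) + c)"

fun wf_layers :: "nat \<Rightarrow> layer list \<Rightarrow> real list \<Rightarrow> bool" where
  "wf_layers n [] w = (length w = n)"
| "wf_layers n ((W, b) # Ls) w =
     (length b = length W \<and> (\<forall>row\<in>set W. length row = n) \<and> wf_layers (length W) Ls w)"

definition is_net :: "nat \<Rightarrow> nat \<Rightarrow> nat \<Rightarrow> net \<Rightarrow> bool" where
  "is_net d L \<omega> phi =
     (case phi of (Ls, w, c) \<Rightarrow>
        wf_layers (2 * d) Ls w \<and> length Ls + 1 = L \<and>
        (\<forall>l\<in>set Ls. length (fst l) \<le> \<omega>))"

definition sqnorm :: "net \<Rightarrow> real" where
  "sqnorm phi =
     (case phi of (Ls, w, c) \<Rightarrow>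
        (\<Sum>l\<leftarrow>Ls. (\<Sum>row\<leftarrow>fst l. \<Sum>a\<leftarrow>row. a\<^sup>2) + (\<Sum>a\<leftarrow>snd l. a\<^sup>2))
        + (\<Sum>a\<leftarrow>w. a\<^sup>2) + c\<^sup>2)"

text \<open>The input domain X_d = S^(d-1) x S^(d-1), a subset of R^(2d).\<close>
definition Xd :: "nat \<Rightarrow> real list set" where
  "Xd d = {x. length x = 2 * d \<and> (\<Sum>a\<leftarrow>take d x. a\<^sup>2) = 1 \<and> (\<Sum>a\<leftarrow>drop d x. a\<^sup>2) = 1}"

definition realizes :: "nat \<Rightarrow> nat \<Rightarrow> nat \<Rightarrow> net \<Rightarrow> (real list \<Rightarrow> real) \<Rightarrow> bool" where
  "realizes d L \<omega> phi f = (is_net d L \<omega> phi \<and> (\<forall>x\<in>Xd d. eval_net phi x = f x))"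

definition in_N :: "nat \<Rightarrow> nat \<Rightarrow> nat \<Rightarrow> (real list \<Rightarrow> real) \<Rightarrow> bool" where
  "in_N d L \<omega> f = (\<exists>phi. realizes d L \<omega> phi f)"

definition R_cost :: "nat \<Rightarrow> nat \<Rightarrow> nat \<Rightarrow> (real list \<Rightarrow> real) \<Rightarrow> real" where
  "R_cost d L \<omega> f = Inf {sqnorm phi / real L | phi. realizes d L \<omega> phi f}"

end

theory Submission
  imports Defs
begin

lemma sum_list_map2_mult:
  assumes "length r = n" "length x = n"
  shows "sum_list (map2 (*) r x) = (\<Sum>i<n. r!i * x!i)"
  using assms by (simp add: sum_list_sum_nth atLeast0LessThan)

lemma sqnorm_nonneg: "0 \<le> sqnorm phi"
  unfolding sqnorm_def
  by (auto split: prod.splits intro!: sum_list_nonneg add_nonneg_nonneg)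

lemma ite_mult: "(if P then (c::real) else 0) * y = (if P then c * y else 0)"
  by simp

definition idV :: "nat \<Rightarrow> real list list" where
  "idV n = map (\<lambda>i. map (\<lambda>j. if j = i then 1 else 0) [0..<n]) [0..<n]
         @ map (\<lambda>i. map (\<lambda>j. if j = i then -1 else 0) [0..<n]) [0..<n]"

lemma matvec_idV:
  assumes "length x = n"
  shows "matvec (idV n) x = map (\<lambda>i. x!i) [0..<n] @ map (\<lambda>i. - (x!i)) [0..<n]"
proof -
  have a: "sum_list (map2 (*) (map (\<lambda>j. if j = i then 1 else 0) [0..<n]) x) = x!i"
    if "i < n" for i
    using that assms by (subst sum_list_map2_mult[of _ n]) (auto simp: ite_mult)
  have b: "sum_list (map2 (*) (map (\<lambda>j. if j = i then -1 else 0) [0..<n]) x) = - (x!i)"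
    if "i < n" for i
    using that assms by (subst sum_list_map2_mult[of _ n]) (auto simp: ite_mult)
  show ?thesis unfolding matvec_def idV_def using a b by simp
qed

lemma layer1:
  assumes "length x = n"
  shows "apply_layer (idV n, replicate (2*n) 0) x =
     map (\<lambda>i. relu (x!i)) [0..<n] @ map (\<lambda>i. relu (- (x!i))) [0..<n]"
proof -
  have "map2 (+) (map (\<lambda>i. x!i) [0..<n] @ map (\<lambda>i. - (x!i)) [0..<n]) (replicate (2*n) (0::real))
     = map (\<lambda>i. x!i) [0..<n] @ map (\<lambda>i. - (x!i)) [0..<n]"
    by (rule nth_equalityI) (auto simp: nth_append)
  then show ?thesis unfolding apply_layer_def using matvec_idV[OF assms] by simp
qed

definition dbl :: "real list list \<Rightarrow> real list list" where
  "dbl W = map (\<lambda>row. row @ map uminus row) W"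

lemma relu_diff: "relu a - relu (-a) = a"
  by (simp add: relu_def)

lemma matvec_dbl:
  assumes "length x = n" "\<forall>row\<in>set W. length row = n"
  shows "matvec (dbl W) (map (\<lambda>i. relu (x!i)) [0..<n] @ map (\<lambda>i. relu (- (x!i))) [0..<n])
       = matvec W x"
proof -
  have "sum_list (map2 (*) (row @ map uminus row)
          (map (\<lambda>i. relu (x!i)) [0..<n] @ map (\<lambda>i. relu (- (x!i))) [0..<n]))
        = sum_list (map2 (*) row x)" if "length row = n" for row
  proof -
    have "sum_list (map2 (*) (row @ map uminus row)
          (map (\<lambda>i. relu (x!i)) [0..<n] @ map (\<lambda>i. relu (- (x!i))) [0..<n]))
       = sum_list (map2 (*) row (map (\<lambda>i. relu (x!i)) [0..<n]))
         + sum_list (map2 (*) (map uminus row) (map (\<lambda>i. relu (- (x!i))) [0..<n]))"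
      using that by (simp add: zip_append)
    also have "\<dots> = (\<Sum>i<n. row!i * relu (x!i)) + (\<Sum>i<n. (- row!i) * relu (- (x!i)))"
      using that by (simp add: sum_list_map2_mult[of _ n])
    also have "\<dots> = (\<Sum>i<n. row!i * (relu (x!i) - relu (- (x!i))))"
      by (simp add: sum_subtractf right_diff_distrib sum_negf)
    also have "\<dots> = (\<Sum>i<n. row!i * x!i)" by (simp add: relu_diff)
    also have "\<dots> = sum_list (map2 (*) row x)"
      using that assms by (simp add: sum_list_map2_mult[of _ n])
    finally show ?thesis .
  qed
  then show ?thesis using assms(2) unfolding matvec_def dbl_def by simp
qed

lemma sq_row: "i < n \<Longrightarrow> (\<Sum>j\<leftarrow>[0..<n]. (if j = i then (c::real) else 0)\<^sup>2) = c\<^sup>2"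
proof -
  assume "i < n"
  have "(\<Sum>j\<leftarrow>[0..<n]. (if j = i then (c::real) else 0)\<^sup>2)
      = (\<Sum>j\<in>{0..<n}. (if j = i then (c::real) else 0)\<^sup>2)"
    by (simp add: sum_set_upt_conv_sum_list_nat[symmetric])
  also have "\<dots> = (\<Sum>j\<in>{0..<n}. if j = i then c\<^sup>2 else 0)"
    by (rule sum.cong) auto
  also have "\<dots> = c\<^sup>2" using \<open>i < n\<close> by simp
  finally show ?thesis .
qed

lemma sq_idV: "(\<Sum>row\<leftarrow>idV n. \<Sum>a\<leftarrow>row. a\<^sup>2) = 2 * real n"
proof -
  have e1: "(\<Sum>i\<leftarrow>[0..<n]. \<Sum>j\<leftarrow>[0..<n]. (if j = i then (c::real) else 0)\<^sup>2)
      = (\<Sum>i\<leftarrow>[0..<n]. c\<^sup>2)" for c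
    by (rule arg_cong[where f=sum_list], rule map_cong) (auto simp: sq_row)
  have "(\<Sum>row\<leftarrow>idV n. \<Sum>a\<leftarrow>row. a\<^sup>2) = (\<Sum>i\<leftarrow>[0..<n]. \<Sum>j\<leftarrow>[0..<n]. (if j = i then (1::real) else 0)\<^sup>2)
     + (\<Sum>i\<leftarrow>[0..<n]. \<Sum>j\<leftarrow>[0..<n]. (if j = i then (-1::real) else 0)\<^sup>2)"
    unfolding idV_def by (simp add: comp_def)
  also have "\<dots> = 2 * real n" unfolding e1 by (simp add: sum_list_triv)
  finally show ?thesis .
qed

lemma sq_dbl: "(\<Sum>row\<leftarrow>dbl W. \<Sum>a\<leftarrow>row. a\<^sup>2) = 2 * (\<Sum>row\<leftarrow>W. \<Sum>a\<leftarrow>row. (a::real)\<^sup>2)"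
  unfolding dbl_def by (induction W) (auto simp: comp_def)

lemma lift:
  assumes "realizes d 2 \<omega> phi f"
  shows "\<exists>psi. realizes d 3 (max \<omega> (4 * d)) psi f \<and>
           sqnorm psi / 3 \<le> 4 * real d / 3 + 4 / 3 * (sqnorm phi / 2)"
proof -
  obtain Ls w c where phi: "phi = (Ls, w, c)" by (cases phi) auto
  from assms have net: "is_net d 2 \<omega> phi" and ev: "\<forall>x\<in>Xd d. eval_net phi x = f x"
    unfolding realizes_def by auto
  then obtain W b where Ls: "Ls = [(W, b)]" using phi
    unfolding is_net_def by (cases Ls) auto
  define n where "n = 2 * d"
  have wf: "length b = length W" "\<forall>row\<in>set W. length row = n" "length w = length W"
    "length W \<le> \<omega>"
    using net unfolding is_net_def phi Ls n_def by auto
  define psi where "psi = ([(idV n, replicate (2*n) 0), (dbl W, b)], w, c)"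
  have lenV: "length (idV n) = 2 * n" "\<forall>row\<in>set (idV n). length row = n"
    unfolding idV_def by auto
  have lenD: "length (dbl W) = length W" "\<forall>row\<in>set (dbl W). length row = 2 * n"
    using wf(2) unfolding dbl_def by auto
  have isn: "is_net d 3 (max \<omega> (4 * d)) psi"
    unfolding is_net_def psi_def using wf lenV lenD by (auto simp: n_def)
  have evp: "eval_net psi x = eval_net phi x" if "length x = n" for x
  proof -
    have "apply_layer (dbl W, b) (apply_layer (idV n, replicate (2*n) 0) x) = apply_layer (W, b) x"
    proof -
      have h1: "apply_layer (idV n, replicate (2*n) 0) x =
        map (\<lambda>i. relu (x!i)) [0..<n] @ map (\<lambda>i. relu (- (x!i))) [0..<n]"
        by (rule layer1[OF that])
      show ?thesis unfolding h1 unfolding apply_layer_def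
        by (simp only: fst_conv snd_conv matvec_dbl[OF that wf(2)])
    qed
    then show ?thesis unfolding eval_net_def psi_def phi Ls by simp
  qed
  have "realizes d 3 (max \<omega> (4 * d)) psi f"
    unfolding realizes_def using isn evp ev by (auto simp: Xd_def n_def)
  moreover
  have sp: "sqnorm psi = 2 * real n + (2 * (\<Sum>row\<leftarrow>W. \<Sum>a\<leftarrow>row. a\<^sup>2) + (\<Sum>a\<leftarrow>b. a\<^sup>2))
      + (\<Sum>a\<leftarrow>w. a\<^sup>2) + c\<^sup>2"
    unfolding sqnorm_def psi_def by (simp add: sq_idV sq_dbl sum_list_replicate)
  have sph: "sqnorm phi = ((\<Sum>row\<leftarrow>W. \<Sum>a\<leftarrow>row. a\<^sup>2) + (\<Sum>a\<leftarrow>b. a\<^sup>2))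
      + (\<Sum>a\<leftarrow>w. a\<^sup>2) + c\<^sup>2"
    unfolding sqnorm_def phi Ls by simp
  have nn: "0 \<le> (\<Sum>a\<leftarrow>b. a\<^sup>2)" "0 \<le> (\<Sum>a\<leftarrow>w. a\<^sup>2)" "0 \<le> c\<^sup>2"
    by (auto intro!: sum_list_nonneg)
  have "sqnorm psi / 3 \<le> 4 * real d / 3 + 4 / 3 * (sqnorm phi / 2)"
    unfolding sp sph using nn by (simp add: n_def)
  ultimately show ?thesis by blast
qed

theorem lemma5:
  fixes d \<omega> :: nat and f :: "real list \<Rightarrow> real"
  assumes "in_N d 2 \<omega> f"
  shows "in_N d 3 (max \<omega> (4 * d)) f \<and>
         R_cost d 3 (max \<omega> (4 * d)) f \<le> 4 * real d / 3 + 4 / 3 * R_cost d 2 \<omega> f"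
proof -
  let ?S3 = "{sqnorm phi / real 3 | phi. realizes d 3 (max \<omega> (4 * d)) phi f}"
  let ?S2 = "{sqnorm phi / real 2 | phi. realizes d 2 \<omega> phi f}"
  obtain phi0 where p0: "realizes d 2 \<omega> phi0 f" using assms unfolding in_N_def by auto
  have bdd: "bdd_below ?S3"
  proof (rule bdd_belowI[of _ 0])
    fix s assume "s \<in> ?S3"
    then obtain phi where "s = sqnorm phi / real 3" by blast
    then show "0 \<le> s" using sqnorm_nonneg[of phi] by simp
  qed
  have key: "(3 * R_cost d 3 (max \<omega> (4 * d)) f - 4 * real d) / 4 \<le> s" if "s \<in> ?S2" for s
  proof -
    from that obtain phi where ph: "realizes d 2 \<omega> phi f" "s = sqnorm phi / 2" by auto
    from lift[OF ph(1)] obtain psi where ps: "realizes d 3 (max \<omega> (4 * d)) psi f"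
      "sqnorm psi / 3 \<le> 4 * real d / 3 + 4 / 3 * (sqnorm phi / 2)" by blast
    have "R_cost d 3 (max \<omega> (4 * d)) f \<le> sqnorm psi / real 3"
    proof -
      have "sqnorm psi / real 3 \<in> ?S3" using ps(1) by blast
      then show ?thesis unfolding R_cost_def by (rule cInf_lower[OF _ bdd])
    qed
    then show ?thesis using ps(2) ph(2) by simp
  qed
  have "sqnorm phi0 / real 2 \<in> ?S2" using p0 by blast
  then have ne: "?S2 \<noteq> {}" by blast
  have "(3 * R_cost d 3 (max \<omega> (4 * d)) f - 4 * real d) / 4 \<le> R_cost d 2 \<omega> f"
    unfolding R_cost_def[of d 2] by (rule cInf_greatest[OF ne]) (use key in auto)
  moreover have "in_N d 3 (max \<omega> (4 * d)) f"
    using lift[OF p0] unfolding in_N_def by blast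
  ultimately show ?thesis by simp
qed

end
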